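(* Suppose $x\in X$ has $\deg(x)=i<\infty$ and fix any integer $n>i$. Then for every $m\geq0$ we have $\min_{j\geq m}\deg\big(T^j(x)_n\big)\leq i+1$.
   Context: Paths and cycles: a graph is $G=(V,E)$ with $V$ finite and $E\subset V\times V$. A path is a finite sequence of vertices $(u_0,\dots,u_L)$ with $(u_j,u_{j+1})\in E$; its length is $|\cdot|=L$; a cycle is a path with $u_0=u_L$. For paths where one ends where the next starts, $+$ denotes concatenation and $a\,c$ means the cycle $c$ traversed $a$ times. Construction: $G_0=(V_0,E_0)$ with $V_0=\{v_{0,0}\}$, $E_0=\{e_{0,0}\}$, $e_{0,0}=(v_{0,0},v_{0,0})$. For $n\geq1$, $G_n=(V_n,E_n)$ consists of a vertex $v_{n,0}$, the loop $e_{n,0}=(v_{n,0},v_{n,0})$, and $n$ cycles $c_{n,1},\dots,c_{n,n}$, each starting and ending at $v_{n,0}$, whose vertices other than $v_{n,0}$ are pairwise distinct (within each cycle and across cycles); $V_n$ is the set of all these vertices and $E_n$ consists of $e_{n,0}$ and the edges of the cycles. The maps $\varphi_n\colon V_{n+1}\to V_n$ and the lengths of the cycles $c_{n+1,i}$ are defined together: $\varphi_n(v_{n+1,0})=v_{n,0}$, and for each $i$ a path $P_{n,i}$ in $G_n$ from $v_{n,0}$ to $v_{n,0}$ is given; $c_{n+1,i}$ has length $|P_{n,i}|$ and $\varphi_n$ maps its $j$-th vertex to the $j$-th vertex of $P_{n,i}$ (written $\varphi_n(c_{n+1,i})=P_{n,i}$). The paths are: $P_{0,1}=10\,e_{0,0}$;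 for $n\geq1$: $P_{n,i}=e_{n,0}+2c_{n,i}+2c_{n,i+1}+\dots+2c_{n,n}+e_{n,0}$ for $2\leq i\leq n$; $P_{n,n+1}=(n+2)^2\big(\sum_{i=1}^n|c_{n,i}|\big)\,e_{n,0}$; and $P_{n,1}=(1\,e_{n,0}+2c_{n,1})+(2\,e_{n,0}+2c_{n,1})+\dots+(k_n\,e_{n,0}+2c_{n,1})+e_{n,0}+2c_{n,2}+\dots+2c_{n,n}+e_{n,0}$, where $k_n=2\big(1+\sum_{i=1}^n|c_{n,i}|\big)$. Let $X=\{x\in\prod_{n\geq0}V_n:\varphi_n(x_{n+1})=x_n\ \forall n\}$ with metric $d(x,y)=2^{-\min\{i:x_i\neq y_i\}}$ ($d(x,x)=0$); $X$ is a compact zero-dimensional metric space, and $T\colon X\to X$ defined by $T(x)=y$ iff $(x_n,y_n)\in E_n$ for all $n$ is a well-defined homeomorphism. Write $x_n$ for the $n$-th coordinate of $x$. Degree: for $v\in V_n$, $\deg(v)=+\infty$ if $v=v_{n,0}$ and $\deg(v)=i$ if $v$ is a vertex of $c_{n,i}$ different from $v_{n,0}$; for $x\in X$, $\deg(x)=\min_n\deg(x_n)$. *)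

theory Defs
  imports Main "HOL-Library.Extended_Nat"
begin

text \<open>Vertex encoding: in G_n the base vertex v_{n,0} is (0,0); the j-th vertex
(1 <= j < |c_{n,i}|) of the cycle c_{n,i} is (i,j).  A closed path from v_{n,0}
of length L is encoded by its list of the first L vertices (the final v_{n,0}
is omitted), so concatenation of closed paths is list append and |P| = length.\<close>

type_synonym vtx = "nat \<times> nat"

definition base :: vtx where "base = (0,0)"

definition cw :: "(nat \<Rightarrow> nat) \<Rightarrow> nat \<Rightarrow> vtx list" where
  "cw l i = base # map (\<lambda>j. (i,j)) [1..<l i]"

definition Pw :: "nat \<Rightarrow> (nat \<Rightarrow> nat) \<Rightarrow> nat \<Rightarrow> vtx list" where
  "Pw n l i =
    (if n = 0 then (if i = 1 then replicate 10 base else [])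
     else
       (let S = (\<Sum>k=1..n. l k); kn = 2 * (1 + S) in
        if i = n + 1 then replicate ((n+2)^2 * S) base
        else if 2 \<le> i \<and> i \<le> n then
          [base] @ concat (map (\<lambda>k. cw l k @ cw l k) [i..<n+1]) @ [base]
        else if i = 1 then
          concat (map (\<lambda>a. replicate a base @ cw l 1 @ cw l 1) [1..<kn+1])
          @ [base] @ concat (map (\<lambda>k. cw l k @ cw l k) [2..<n+1]) @ [base]
        else []))"

text \<open>lenf n i = |c_{n,i}| (for 1 <= i <= n).\<close>
primrec lenf :: "nat \<Rightarrow> nat \<Rightarrow> nat" where
  "lenf 0 = (\<lambda>i. 0)"
| "lenf (Suc n) = (\<lambda>i. length (Pw n (lenf n) i))"

definition Vs :: "nat \<Rightarrow> vtx set" where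
  "Vs n = insert base {(i,j). 1 \<le> i \<and> i \<le> n \<and> 1 \<le> j \<and> j < lenf n i}"

definition Es :: "nat \<Rightarrow> (vtx \<times> vtx) set" where
  "Es n = insert (base, base)
     {(cw (lenf n) i ! j, cw (lenf n) i ! (Suc j mod length (cw (lenf n) i))) | i j.
        1 \<le> i \<and> i \<le> n \<and> j < length (cw (lenf n) i)}"

definition phi :: "nat \<Rightarrow> vtx \<Rightarrow> vtx" where
  "phi n v = (if v = base then base else Pw n (lenf n) (fst v) ! snd v)"

definition Xs :: "(nat \<Rightarrow> vtx) set" where
  "Xs = {x. \<forall>n. x n \<in> Vs n \<and> phi n (x (Suc n)) = x n}"

definition Tmap :: "(nat \<Rightarrow> vtx) \<Rightarrow> (nat \<Rightarrow> vtx)" where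
  "Tmap x = (THE y. y \<in> Xs \<and> (\<forall>n. (x n, y n) \<in> Es n))"

definition degv :: "vtx \<Rightarrow> enat" where
  "degv v = (if v = base then \<infinity> else enat (fst v))"

definition degX :: "(nat \<Rightarrow> vtx) \<Rightarrow> enat" where
  "degX x = (INF n. degv (x n))"

end

theory Submission
  imports Defs
begin

lemma cw_len: "1 \<le> l a \<Longrightarrow> length (cw l a) = l a"
  by (simp add: cw_def)
lemma cw_0[simp]: "cw l a ! 0 = base"
  by (simp add: cw_def)
lemma cw_j: "1 \<le> j \<Longrightarrow> j < l a \<Longrightarrow> cw l a ! j = (a,j)"
  by (simp add: cw_def nth_Cons')
lemma cw_set: "set (cw l a) \<subseteq> insert base {v. fst v = a}"
  by (auto simp: cw_def)
lemma base_neq[simp]: "1 \<le> a \<Longrightarrow> (a,j) \<noteq> base" "1 \<le> a \<Longrightarrow> base \<noteq> (a,j)"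
  by (auto simp: base_def)

lemma lenf_Suc: "lenf (Suc k) a = length (Pw k (lenf k) a)" by simp

lemma lenf_ge2: "1 \<le> a \<Longrightarrow> a \<le> k \<Longrightarrow> 2 \<le> lenf k a"
proof (induction k arbitrary: a)
  case 0 then show ?case by simp
next
  case (Suc k)
  show ?case
  proof (cases "k = 0")
    case True then have "a = 1" using Suc by simp
    then show ?thesis using True by (simp add: Pw_def)
  next
    case False
    have S: "2 \<le> (\<Sum>j=1..k. lenf k j)"
    proof -
      have "lenf k 1 \<le> (\<Sum>j=1..k. lenf k j)"
        using False by (intro member_le_sum) auto
      moreover have "2 \<le> lenf k 1" using Suc.IH[of 1] False by simp
      ultimately show ?thesis by simp
    qed
    show ?thesis
    proof (cases "a = k+1")
      case True
      have "2 \<le> (k+2)^2 * (\<Sum>j=1..k. lenf k j)"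
        using S by (metis le_trans mult_le_mono2 mult_1 one_le_power le_add2 add_leD2 one_le_numeral trans_le_add2 mult.commute)
      then show ?thesis using True False by (simp add: Pw_def Let_def)
    next
      case False2: False
      then show ?thesis using False Suc.prems by (auto simp: Pw_def Let_def)
    qed
  qed
qed

lemma Vs_iff: "v \<in> Vs k \<longleftrightarrow> v = base \<or> (1 \<le> fst v \<and> fst v \<le> k \<and> 1 \<le> snd v \<and> snd v < lenf k (fst v))"
  by (cases v) (auto simp: Vs_def)

lemma E_base[simp]: "(base,base) \<in> Es k" by (simp add: Es_def)

lemma E_cases:
  assumes "(v,w) \<in> Es k"
  shows "(v = base \<and> w = base) \<or> (\<exists>a j. 1\<le>a \<and> a\<le>k \<and> j < lenf k a \<and> v = cw (lenf k) a ! j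
           \<and> w = cw (lenf k) a ! (Suc j mod lenf k a))"
proof -
  have "(v,w) = (base,base) \<or> (\<exists>i j. (v,w) = (cw (lenf k) i ! j, cw (lenf k) i ! (Suc j mod length (cw (lenf k) i)))
      \<and> 1 \<le> i \<and> i \<le> k \<and> j < length (cw (lenf k) i))"
    using assms unfolding Es_def by blast
  then show ?thesis
  proof
    assume "(v,w) = (base,base)" then show ?thesis by simp
  next
    assume "\<exists>i j. (v,w) = (cw (lenf k) i ! j, cw (lenf k) i ! (Suc j mod length (cw (lenf k) i)))
      \<and> 1 \<le> i \<and> i \<le> k \<and> j < length (cw (lenf k) i)"
    then obtain i j where h: "(v,w) = (cw (lenf k) i ! j, cw (lenf k) i ! (Suc j mod length (cw (lenf k) i)))"
      "1 \<le> i" "i \<le> k" "j < length (cw (lenf k) i)" by blast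
    have "length (cw (lenf k) i) = lenf k i" using lenf_ge2[of i k] h cw_len[of "lenf k" i] by simp
    then show ?thesis using h by auto
  qed
qed

lemma E_cw: "1\<le>a \<Longrightarrow> a\<le>k \<Longrightarrow> j < lenf k a \<Longrightarrow>
   (cw (lenf k) a ! j, cw (lenf k) a ! (Suc j mod lenf k a)) \<in> Es k"
proof -
  assume h: "1\<le>a" "a\<le>k" "j < lenf k a"
  have L: "length (cw (lenf k) a) = lenf k a" using lenf_ge2[of a k] h cw_len[of "lenf k" a] by simp
  have "\<exists>i j'. (cw (lenf k) a ! j, cw (lenf k) a ! (Suc j mod lenf k a)) = (cw (lenf k) i ! j', cw (lenf k) i ! (Suc j' mod length (cw (lenf k) i)))
      \<and> 1 \<le> i \<and> i \<le> k \<and> j' < length (cw (lenf k) i)"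
    using h L by (intro exI[of _ a] exI[of _ j]) simp
  then show ?thesis unfolding Es_def by blast
qed

definition sc :: "nat \<Rightarrow> vtx \<Rightarrow> vtx" where
  "sc k v = (if v = base then base else if Suc (snd v) < lenf k (fst v) then (fst v, Suc (snd v)) else base)"

lemma E_U: assumes "v \<noteq> base" "(v,w) \<in> Es k" shows "w = sc k v"
proof -
  from E_cases[OF assms(2)] assms(1) obtain a j where
    h: "1\<le>a" "a\<le>k" "j < lenf k a" "v = cw (lenf k) a ! j" "w = cw (lenf k) a ! (Suc j mod lenf k a)"
    by blast
  have "j \<noteq> 0" using h assms(1) by (metis cw_0)
  then have v: "v = (a,j)" using h cw_j by simp
  show ?thesis
  proof (cases "Suc j < lenf k a")
    case True then show ?thesis using h(1,5) v cw_j[of "Suc j" "lenf k" a] by (simp add: sc_def)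
  next
    case False then have "Suc j = lenf k a" using h by simp
    then have "w = base" using h by simp
    then show ?thesis using \<open>Suc j = lenf k a\<close> unfolding v by (simp add: sc_def)
  qed
qed

lemma E_base_succ: assumes "(base,w) \<in> Es k" shows "w = base \<or> (\<exists>a. 1\<le>a \<and> a\<le>k \<and> w = (a,1))"
proof -
  { fix a j assume h: "1\<le>a" "a\<le>k" "j < lenf k a" "base = cw (lenf k) a ! j" "w = cw (lenf k) a ! (Suc j mod lenf k a)"
    have "j = 0" using h cw_j[of j "lenf k" a] by (cases "j = 0") auto
    moreover have "2 \<le> lenf k a" using lenf_ge2 h by simp
    ultimately have "w = (a,1)" using h cw_j[of 1 "lenf k" a] by simp
    then have ?thesis using h by blast }
  then show ?thesis using E_cases[OF assms] by blast
qed

lemma sc_edge: assumes "v \<in> Vs k" "v \<noteq> base" shows "(v, sc k v) \<in> Es k" "sc k v \<in> Vs k"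
proof -
  obtain a c where v: "v = (a,c)" "1 \<le> a" "a \<le> k" "1 \<le> c" "c < lenf k a"
    using assms Vs_iff[of v k] by (cases v) auto
  have "(cw (lenf k) a ! c, cw (lenf k) a ! (Suc c mod lenf k a)) \<in> Es k" using E_cw v by simp
  moreover have "cw (lenf k) a ! c = v" using v cw_j by simp
  moreover have "cw (lenf k) a ! (Suc c mod lenf k a) = sc k v"
  proof (cases "Suc c < lenf k a")
    case True then show ?thesis using v cw_j[of "Suc c" "lenf k" a] by (auto simp: sc_def)
  next
    case False then have "Suc c = lenf k a" using v by simp
    then show ?thesis using v by (auto simp: sc_def)
  qed
  ultimately show "(v, sc k v) \<in> Es k" by simp
  show "sc k v \<in> Vs k" using v by (auto simp: sc_def Vs_iff)
qed

definition cwalk :: "nat \<Rightarrow> vtx list \<Rightarrow> bool" where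
  "cwalk k w \<longleftrightarrow> (\<forall>q<length w. w!q \<in> Vs k \<and> (w!q, (w@[base])!Suc q) \<in> Es k) \<and> (w \<noteq> [] \<longrightarrow> hd w = base)"

lemma cwalk_Nil[simp]: "cwalk k []" by (simp add: cwalk_def)

lemma app_base_nth: "w2 = [] \<or> hd w2 = base \<Longrightarrow> q < length w1 \<Longrightarrow> (w1@w2@[base])!Suc q = (w1@[base])!Suc q"
proof -
  assume h: "w2 = [] \<or> hd w2 = base" "q < length w1"
  show ?thesis
  proof (cases "Suc q < length w1")
    case True then show ?thesis by (simp add: nth_append)
  next
    case False then have "Suc q = length w1" using h by simp
    moreover have "(w2@[base])!0 = base" using h by (cases w2) auto
    ultimately show ?thesis by (simp add: nth_append)
  qed
qed

lemma cwalk_append: assumes "cwalk k w1" "cwalk k w2" shows "cwalk k (w1 @ w2)"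
proof -
  have h2: "w2 = [] \<or> hd w2 = base" using assms(2) by (auto simp: cwalk_def)
  { fix q assume q: "q < length (w1@w2)"
    have "(w1@w2)!q \<in> Vs k \<and> ((w1@w2)!q, ((w1@w2)@[base])!Suc q) \<in> Es k"
    proof (cases "q < length w1")
      case True
      then show ?thesis using assms(1) app_base_nth[OF h2 True] by (simp add: cwalk_def nth_append)
    next
      case False
      define q' where "q' = q - length w1"
      have q': "q' < length w2" "q = length w1 + q'" using q False by (auto simp: q'_def)
      have "(w1@w2)!q = w2!q'" "((w1@w2)@[base])!Suc q = (w2@[base])!Suc q'"
        using q' by (simp_all add: nth_append)
      then show ?thesis using assms(2) q' by (simp add: cwalk_def)
    qed }
  moreover have "w1 @ w2 \<noteq> [] \<longrightarrow> hd (w1@w2) = base" using assms by (cases w1) (auto simp: cwalk_def)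
  ultimately show ?thesis by (simp add: cwalk_def)
qed

lemma cwalk_concat: "(\<And>w. w \<in> set ws \<Longrightarrow> cwalk k w) \<Longrightarrow> cwalk k (concat ws)"
  by (induction ws) (auto intro: cwalk_append)

lemma cwalk_replicate: "cwalk k (replicate n base)"
proof -
  have "(replicate n base @ [base]) ! Suc q = base" if "q < n" for q
    using that by (simp add: nth_append)
  then show ?thesis by (auto simp: cwalk_def Vs_def)
qed

lemma cwalk_cw: assumes "1 \<le> a" "a \<le> k" shows "cwalk k (cw (lenf k) a)"
proof -
  have L2: "2 \<le> lenf k a" using lenf_ge2 assms by simp
  have L: "length (cw (lenf k) a) = lenf k a" using L2 cw_len[of "lenf k" a] by simp
  { fix q assume q: "q < lenf k a"
    have "(cw (lenf k) a @ [base]) ! Suc q = cw (lenf k) a ! (Suc q mod lenf k a)"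
    proof (cases "Suc q < lenf k a")
      case True then show ?thesis using L by (simp add: nth_append)
    next
      case False then have "Suc q = lenf k a" using q by simp
      then show ?thesis using L by (simp add: nth_append)
    qed
    moreover have "cw (lenf k) a ! q \<in> Vs k"
      using q assms cw_j[of q "lenf k" a] by (cases "q = 0") (auto simp: Vs_iff)
    ultimately have "cw (lenf k) a ! q \<in> Vs k \<and> (cw (lenf k) a ! q, (cw (lenf k) a @ [base]) ! Suc q) \<in> Es k"
      using E_cw[OF assms q] by simp }
  then show ?thesis using L by (auto simp: cwalk_def cw_def)
qed

lemma cwalk_base: "cwalk k [base]" using cwalk_replicate[of k 1] by simp

lemma cwalk_cw2: "1 \<le> a \<Longrightarrow> a \<le> k \<Longrightarrow> cwalk k (cw (lenf k) a @ cw (lenf k) a)"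
  by (intro cwalk_append cwalk_cw)

lemma P_props:
  assumes "1 \<le> a" "a \<le> Suc k"
  shows "cwalk k (Pw k (lenf k) a) \<and> last (Pw k (lenf k) a) = base \<and> Pw k (lenf k) a ! 1 = base
         \<and> 2 \<le> length (Pw k (lenf k) a)"
proof -
  have len: "2 \<le> length (Pw k (lenf k) a)" using lenf_ge2[of a "Suc k"] assms by simp
  show ?thesis
  proof (cases "k = 0")
    case True then have "a = 1" using assms by simp
    then show ?thesis using True by (simp add: Pw_def cwalk_replicate)
  next
    case k: False
    define S where "S = (\<Sum>j=1..k. lenf k j)"
    show ?thesis
    proof (cases "a = Suc k")
      case True
      have P: "Pw k (lenf k) a = replicate ((k+2)^2 * S) base" using True k by (simp add: Pw_def Let_def S_def)
      have "(k+2)^2 * S \<noteq> 0" using len P by (metis length_replicate not_numeral_le_zero)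
      then show ?thesis using len P by (simp add: cwalk_replicate)
    next
      case a: False
      show ?thesis
      proof (cases "a = 1")
        case True
        define kn where "kn = 2 * (1 + S)"
        define A where "A = concat (map (\<lambda>a. replicate a base @ cw (lenf k) 1 @ cw (lenf k) 1) [1..<kn+1])"
        define B where "B = concat (map (\<lambda>j. cw (lenf k) j @ cw (lenf k) j) [2..<k+1])"
        have P: "Pw k (lenf k) a = A @ [base] @ B @ [base]"
          using True k by (simp add: Pw_def Let_def S_def kn_def A_def B_def)
        have cA: "cwalk k A" unfolding A_def using k
          by (intro cwalk_concat) (auto intro!: cwalk_append cwalk_replicate cwalk_cw)
        have cB: "cwalk k B" unfolding B_def using k
          by (intro cwalk_concat) (auto intro!: cwalk_cw2)
        have "[1..<kn+1] = 1 # [Suc 1..<kn+1]" by (rule upt_conv_Cons) (simp add: kn_def)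
        then have "A = (base # cw (lenf k) 1 @ cw (lenf k) 1) @ concat (map (\<lambda>a. replicate a base @ cw (lenf k) 1 @ cw (lenf k) 1) [Suc 1..<kn+1])"
          unfolding A_def by (simp del: upt_Suc)
        then have "A ! 1 = base \<and> 1 < length A" by (simp add: cw_def)
        moreover have "cwalk k (A @ [base] @ B @ [base])" by (intro cwalk_append cwalk_base cA cB)
        ultimately show ?thesis using P by (simp add: nth_append)
      next
        case a1: False
        define B where "B = concat (map (\<lambda>j. cw (lenf k) j @ cw (lenf k) j) [a..<k+1])"
        have P: "Pw k (lenf k) a = [base] @ B @ [base]"
          using a1 a assms k by (simp add: Pw_def Let_def S_def B_def)
        have cB: "cwalk k B" unfolding B_def using assms
          by (intro cwalk_concat) (auto intro!: cwalk_cw2)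
        have "B ! 0 = base" "B \<noteq> []" using a a1 assms upt_conv_Cons[of a "k+1"] by (auto simp: B_def cw_def)
        moreover have "cwalk k ([base] @ B @ [base])" by (intro cwalk_append cwalk_base cB)
        ultimately show ?thesis using P by (simp add: nth_append)
      qed
    qed
  qed
qed

definition Bk :: "nat \<Rightarrow> nat \<Rightarrow> vtx list" where
  "Bk k a = concat (map (\<lambda>j. cw (lenf k) j @ cw (lenf k) j) [a..<k+1])"
definition Ak :: "nat \<Rightarrow> vtx list" where
  "Ak k = concat (map (\<lambda>a. replicate a base @ cw (lenf k) 1 @ cw (lenf k) 1) [1..<2 * (1 + (\<Sum>j=1..k. lenf k j))+1])"

lemma Bk_cons: "a \<le> k \<Longrightarrow> Bk k a = cw (lenf k) a @ cw (lenf k) a @ Bk k (Suc a)"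
  unfolding Bk_def by (simp add: upt_conv_Cons del: upt_Suc)

lemma Bk_set: "v \<in> set (Bk k a) \<Longrightarrow> v = base \<or> a \<le> fst v"
  unfolding Bk_def using cw_set by fastforce

lemma Ak_2: "1 \<le> k \<Longrightarrow> Ak k ! 2 = (1,1) \<and> 2 < length (Ak k)"
proof -
  assume k: "1 \<le> k"
  have L: "2 \<le> lenf k 1" using lenf_ge2 k by simp
  have "[1..<2 * (1 + (\<Sum>j=1..k. lenf k j))+1] = 1 # [Suc 1..<2 * (1 + (\<Sum>j=1..k. lenf k j))+1]"
    by (rule upt_conv_Cons) simp
  then have "Ak k = (base # cw (lenf k) 1 @ cw (lenf k) 1) @ concat (map (\<lambda>a. replicate a base @ cw (lenf k) 1 @ cw (lenf k) 1) [Suc 1..<2 * (1 + (\<Sum>j=1..k. lenf k j))+1])"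
    unfolding Ak_def by (simp del: upt_Suc)
  moreover have "cw (lenf k) 1 ! 1 = (1,1)" "1 < length (cw (lenf k) 1)" using L cw_j[of 1 "lenf k" 1] cw_len[of "lenf k" 1] by auto
  ultimately show ?thesis by (simp add: nth_append)
qed

lemma Pw_eq1: "1 \<le> k \<Longrightarrow> Pw k (lenf k) 1 = Ak k @ [base] @ Bk k 2 @ [base]"
  by (simp add: Pw_def Let_def Ak_def Bk_def)
lemma Pw_eq2: "2 \<le> a \<Longrightarrow> a \<le> k \<Longrightarrow> Pw k (lenf k) a = [base] @ Bk k a @ [base]"
  by (simp add: Pw_def Let_def Bk_def)
lemma Pw_eq3: "1 \<le> k \<Longrightarrow> Pw k (lenf k) (Suc k) = replicate ((k+2)^2 * (\<Sum>j=1..k. lenf k j)) base"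
  by (simp add: Pw_def Let_def)

lemma path_edge: "cwalk k w \<Longrightarrow> last w = base \<Longrightarrow> Suc q < length w \<Longrightarrow> (w!q, w!Suc q) \<in> Es k"
  unfolding cwalk_def by (metis Suc_lessD nth_append)

lemma path_Vs: "cwalk k w \<Longrightarrow> q < length w \<Longrightarrow> w!q \<in> Vs k"
  unfolding cwalk_def by blast

lemma P_mono:
  assumes "1 \<le> a" "a \<le> Suc k" "q < length (Pw k (lenf k) a)"
  shows "Pw k (lenf k) a ! q = base \<or> a \<le> fst (Pw k (lenf k) a ! q)"
proof -
  let ?P = "Pw k (lenf k) a"
  have v: "?P ! q \<in> set ?P" using assms by simp
  show ?thesis
  proof (cases "a = 1")
    case True
    then show ?thesis using path_Vs[of k ?P q] P_props[OF assms(1,2)] assms by (auto simp: Vs_iff)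
  next
    case a1: False
    show ?thesis
    proof (cases "a = Suc k")
      case True
      then have "k \<ge> 1" using a1 by simp
      then show ?thesis using True v Pw_eq3[of k] by simp
    next
      case False
      then have "?P = [base] @ Bk k a @ [base]" using a1 assms Pw_eq2 by simp
      then have "?P ! q = base \<or> ?P ! q \<in> set (Bk k a)" using v by auto
      then show ?thesis using Bk_set by blast
    qed
  qed
qed

lemma P_two:
  assumes "1 \<le> a" "a \<le> k"
  shows "Pw k (lenf k) a ! 2 = (a,1) \<and> 2 < length (Pw k (lenf k) a)"
proof (cases "a = 1")
  case True
  have "Pw k (lenf k) a = Ak k @ [base] @ Bk k 2 @ [base]" using Pw_eq1[of k] True assms by simp
  moreover have "Ak k ! 2 = (1,1) \<and> 2 < length (Ak k)" using Ak_2[of k] assms by simp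
  ultimately show ?thesis using True by (metis (no_types, lifting) length_append nth_append trans_less_add1)
next
  case False
  have L: "2 \<le> lenf k a" using lenf_ge2 assms by simp
  have "Pw k (lenf k) a = [base] @ cw (lenf k) a @ cw (lenf k) a @ Bk k (Suc a) @ [base]"
    using False assms Pw_eq2 Bk_cons by simp
  moreover have "cw (lenf k) a ! 1 = (a,1)" "1 < length (cw (lenf k) a)" using L cw_j[of 1 "lenf k" a] cw_len[of "lenf k" a] by auto
  moreover have "cw (lenf k) a \<noteq> []" by (simp add: cw_def)
  ultimately show ?thesis by (simp add: nth_append)
qed

lemma P_split:
  assumes "1 \<le> i" "Suc i \<le> k"
  shows "\<exists>A B. Pw k (lenf k) i = A @ B \<and> 2 \<le> length B \<and> B!1 = (Suc i,1) \<and> (\<forall>v\<in>set B. v = base \<or> fst v \<noteq> i)"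
proof -
  have L: "2 \<le> lenf k (Suc i)" using lenf_ge2 assms by simp
  have c: "cw (lenf k) (Suc i) ! 1 = (Suc i,1)" "1 < length (cw (lenf k) (Suc i))"
    using L cw_j[of 1 "lenf k" "Suc i"] cw_len[of "lenf k" "Suc i"] by auto
  define B where "B = Bk k (Suc i) @ [base]"
  have B: "2 \<le> length B \<and> B!1 = (Suc i,1) \<and> (\<forall>v\<in>set B. v = base \<or> fst v \<noteq> i)"
  proof -
    have "B = cw (lenf k) (Suc i) @ cw (lenf k) (Suc i) @ Bk k (Suc (Suc i)) @ [base]"
      using Bk_cons[OF assms(2)] by (simp add: B_def)
    then have "2 \<le> length B \<and> B!1 = (Suc i,1)" using c by (simp add: nth_append)
    moreover have "\<forall>v\<in>set B. v = base \<or> fst v \<noteq> i" using Bk_set[of _ k "Suc i"] by (fastforce simp: B_def)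
    ultimately show ?thesis by blast
  qed
  show ?thesis
  proof (cases "i = 1")
    case True
    have "Pw k (lenf k) i = (Ak k @ [base]) @ B" using True assms Pw_eq1[of k] by (simp add: B_def numeral_2_eq_2)
    then show ?thesis using B True by blast
  next
    case False
    have "Pw k (lenf k) i = ([base] @ cw (lenf k) i @ cw (lenf k) i) @ B"
      using False assms Pw_eq2[of i k] Bk_cons[of i k] by (simp add: B_def)
    then show ?thesis using B by blast
  qed
qed

lemma phi_base[simp]: "phi k base = base" by (simp add: phi_def)

lemma phi_pair: "1 \<le> a \<Longrightarrow> phi k (a,c) = Pw k (lenf k) a ! c"
  by (simp add: phi_def)

lemma phi_Vs: assumes "v \<in> Vs (Suc k)" shows "phi k v \<in> Vs k"
proof (cases "v = base")
  case True then show ?thesis by (simp add: Vs_def)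
next
  case False
  then obtain a c where v: "v = (a,c)" "1 \<le> a" "a \<le> Suc k" "c < length (Pw k (lenf k) a)"
    using assms by (cases v) (auto simp: Vs_iff)
  then show ?thesis using P_props[OF v(2,3)] path_Vs phi_pair by simp
qed

lemma phi_hom: assumes "(v,w) \<in> Es (Suc k)" shows "(phi k v, phi k w) \<in> Es k"
proof -
  { fix a j assume h: "1\<le>a" "a\<le>Suc k" "j < lenf (Suc k) a" "v = cw (lenf (Suc k)) a ! j"
        "w = cw (lenf (Suc k)) a ! (Suc j mod lenf (Suc k) a)"
    let ?P = "Pw k (lenf k) a"
    have PP: "cwalk k ?P" "last ?P = base" "?P ! 1 = base" "2 \<le> length ?P"
      using P_props[OF h(1,2)] by auto
    have L: "lenf (Suc k) a = length ?P" by simp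
    have ?thesis
    proof (cases "j = 0")
      case True
      then have "v = base" "w = (a,1)" using h PP cw_j[of 1 "lenf (Suc k)" a] by auto
      then show ?thesis using PP h phi_pair by simp
    next
      case j: False
      have v: "v = (a,j)" using h j cw_j by simp
      show ?thesis
      proof (cases "Suc j < lenf (Suc k) a")
        case True
        then have w: "w = (a, Suc j)" using h cw_j[of "Suc j" "lenf (Suc k)" a] by simp
        show ?thesis using path_edge[OF PP(1,2)] True L v w h phi_pair by simp
      next
        case False
        then have "Suc j = length ?P" using h by simp
        then have "w = base" using h by simp
        moreover have "?P ! j = base" using PP(2,4) \<open>Suc j = length ?P\<close>
          by (metis diff_Suc_1 last_conv_nth list.size(3) not_numeral_le_zero)
        then have "phi k v = base" using v h phi_pair by simp
        ultimately show ?thesis by simp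
      qed
    qed }
  then show ?thesis using E_cases[OF assms] by auto
qed

lemma Xs_D: "z \<in> Xs \<Longrightarrow> z k \<in> Vs k" "z \<in> Xs \<Longrightarrow> phi k (z (Suc k)) = z k"
  by (auto simp: Xs_def)

lemma nonbase_up: assumes "z \<in> Xs" "z N \<noteq> base" "N \<le> k" shows "z k \<noteq> base"
proof -
  have "\<forall>d. z (N + d) = base \<longrightarrow> z N = base"
  proof
    fix d show "z (N + d) = base \<longrightarrow> z N = base"
    proof (induction d)
      case 0 then show ?case by simp
    next
      case (Suc d)
      have "phi (N+d) (z (Suc (N + d))) = z (N+d)" by (rule Xs_D(2)[OF assms(1)])
      then show ?case using Suc by auto
    qed
  qed
  then show ?thesis using assms by (metis le_add_diff_inverse)
qed

lemma phi_sc: assumes "v \<in> Vs (Suc k)" "v \<noteq> base" "phi k v \<noteq> base"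
  shows "phi k (sc (Suc k) v) = sc k (phi k v)"
proof -
  obtain a c where v: "v = (a,c)" "1 \<le> a" "a \<le> Suc k" "c < length (Pw k (lenf k) a)"
    using assms by (cases v) (auto simp: Vs_iff)
  let ?P = "Pw k (lenf k) a"
  have PP: "cwalk k ?P" "last ?P = base" "2 \<le> length ?P" using P_props[OF v(2,3)] by auto
  have pv: "phi k v = ?P ! c" using v phi_pair by simp
  show ?thesis
  proof (cases "Suc c < length ?P")
    case True
    then have "sc (Suc k) v = (a, Suc c)" using v by (simp add: sc_def)
    then have "phi k (sc (Suc k) v) = ?P ! Suc c" using v phi_pair by simp
    moreover have "(?P ! c, ?P ! Suc c) \<in> Es k" using path_edge[OF PP(1,2) True] .
    ultimately show ?thesis using E_U assms(3) pv by simp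
  next
    case False
    then have "Suc c = length ?P" using v by simp
    then have "?P ! c = base" using PP(2,3)
      by (metis diff_Suc_1 last_conv_nth list.size(3) not_numeral_le_zero)
    then show ?thesis using pv assms(3) by simp
  qed
qed

primrec down :: "nat \<Rightarrow> nat \<Rightarrow> vtx \<Rightarrow> vtx" where
  "down k 0 v = v"
| "down k (Suc d) v = phi k (down (Suc k) d v)"

lemma down_Vs: "v \<in> Vs (k + d) \<Longrightarrow> down k d v \<in> Vs k"
  by (induction d arbitrary: k) (auto intro: phi_Vs)

lemma edge_descend:
  assumes "z \<in> Xs" "y \<in> Xs" "(z (k+d), y (k+d)) \<in> Es (k+d)" shows "(z k, y k) \<in> Es k"
  using assms(3)
proof (induction d arbitrary: k)
  case 0 then show ?case by simp
next
  case (Suc d)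
  have "(z (Suc k + d), y (Suc k + d)) \<in> Es (Suc k + d)" using Suc.prems by simp
  then have "(z (Suc k), y (Suc k)) \<in> Es (Suc k)" by (rule Suc.IH)
  then have "(phi k (z (Suc k)), phi k (y (Suc k))) \<in> Es k" by (rule phi_hom)
  then show ?case using Xs_D(2)[OF assms(1)] Xs_D(2)[OF assms(2)] by simp
qed

lemma eq_descend:
  assumes "y \<in> Xs" "y' \<in> Xs" "y (k+d) = y' (k+d)" shows "y k = y' k"
  using assms(3)
proof (induction d arbitrary: k)
  case 0 then show ?case by simp
next
  case (Suc d)
  have "y (Suc k) = y' (Suc k)" using Suc by simp
  then show ?case using Xs_D(2)[OF assms(1), of k] Xs_D(2)[OF assms(2), of k] by simp
qed

lemma T_unique:
  assumes z: "z \<in> Xs" and y: "y \<in> Xs" "\<forall>n. (z n, y n) \<in> Es n" and y': "y' \<in> Xs" "\<forall>n. (z n, y' n) \<in> Es n"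
  shows "y = y'"
proof (cases "\<forall>k. z k = base")
  case True
  have allb: "w \<in> Xs \<Longrightarrow> \<forall>n. (z n, w n) \<in> Es n \<Longrightarrow> w k = base" for w k
  proof -
    assume w: "w \<in> Xs" "\<forall>n. (z n, w n) \<in> Es n"
    have "(base, w (Suc k)) \<in> Es (Suc k)" using w True by metis
    then have "w (Suc k) = base \<or> (\<exists>a. 1\<le>a \<and> a\<le>Suc k \<and> w (Suc k) = (a,1))" by (rule E_base_succ)
    moreover have "phi k (a,1) = base" if "1\<le>a" "a\<le>Suc k" for a
      using P_props[OF that] phi_pair[OF that(1)] by simp
    ultimately have "phi k (w (Suc k)) = base" by auto
    then show "w k = base" using Xs_D(2)[OF w(1)] by simp
  qed
  show ?thesis using allb[OF y] allb[OF y'] by auto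
next
  case False
  then obtain N where N: "z N \<noteq> base" by blast
  have hi: "y k = y' k" if "N \<le> k" for k
  proof -
    have "z k \<noteq> base" using nonbase_up[OF z N that] .
    then show ?thesis using E_U y(2) y'(2) by metis
  qed
  have "y k = y' k" for k using eq_descend[OF y(1) y'(1), of k N] hi[of "k+N"] by simp
  then show ?thesis by auto
qed

lemma T_exists:
  assumes z: "z \<in> Xs" shows "\<exists>y. y \<in> Xs \<and> (\<forall>n. (z n, y n) \<in> Es n)"
proof (cases "\<forall>k. z k = base")
  case True
  then show ?thesis using z by (intro exI[of _ z]) simp
next
  case False
  then obtain N where N: "z N \<noteq> base" by blast
  have nb: "N \<le> k \<Longrightarrow> z k \<noteq> base" for k using nonbase_up[OF z N] .
  define y where "y k = (if N \<le> k then sc k (z k) else down k (N - k) (sc N (z N)))" for k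
  have scN: "sc N (z N) \<in> Vs N" using sc_edge(2)[OF Xs_D(1)[OF z] N] .
  have yX: "y \<in> Xs"
  proof -
    { fix k
      have "y k \<in> Vs k"
      proof (cases "N \<le> k")
        case True then show ?thesis using sc_edge(2)[OF Xs_D(1)[OF z] nb[OF True]] by (simp add: y_def)
      next
        case False then show ?thesis using down_Vs[of "sc N (z N)" k "N - k"] scN by (simp add: y_def)
      qed
      moreover have "phi k (y (Suc k)) = y k"
      proof (cases "N \<le> k")
        case True
        have "phi k (sc (Suc k) (z (Suc k))) = sc k (phi k (z (Suc k)))"
          using phi_sc[OF Xs_D(1)[OF z] nb] Xs_D(2)[OF z] nb[OF True] True by simp
        then show ?thesis using True Xs_D(2)[OF z] by (simp add: y_def)
      next
        case False
        show ?thesis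
        proof (cases "Suc k = N")
          case True
          then have "N - k = Suc 0" by simp
          then show ?thesis using True by (simp add: y_def)
        next
          case False2: False
          then have "N - k = Suc (N - Suc k)" using False by simp
          then show ?thesis using False False2 by (simp add: y_def)
        qed
      qed
      ultimately have "y k \<in> Vs k \<and> phi k (y (Suc k)) = y k" by simp }
    then show ?thesis by (simp add: Xs_def)
  qed
  have hi: "(z k, y k) \<in> Es k" if "N \<le> k" for k
    using sc_edge(1)[OF Xs_D(1)[OF z] nb[OF that]] that by (simp add: y_def)
  have "(z k, y k) \<in> Es k" for k using edge_descend[OF z yX, of k N] hi[of "k+N"] by simp
  then show ?thesis using yX by blast
qed

lemma T_props: assumes "z \<in> Xs" shows "Tmap z \<in> Xs" "\<forall>n. (z n, Tmap z n) \<in> Es n"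
proof -
  have "\<exists>!y. y \<in> Xs \<and> (\<forall>n. (z n, y n) \<in> Es n)"
    using T_exists[OF assms] T_unique[OF assms] by blast
  then have "Tmap z \<in> Xs \<and> (\<forall>n. (z n, Tmap z n) \<in> Es n)"
    unfolding Tmap_def by (rule theI')
  then show "Tmap z \<in> Xs" "\<forall>n. (z n, Tmap z n) \<in> Es n" by auto
qed

lemma funpow_X: "z \<in> Xs \<Longrightarrow> (Tmap^^s) z \<in> Xs"
  by (induction s) (auto intro: T_props)

lemma T_step: "z \<in> Xs \<Longrightarrow> z k = (a,c) \<Longrightarrow> 1 \<le> a \<Longrightarrow> Suc c < lenf k a \<Longrightarrow> Tmap z k = (a, Suc c)"
proof -
  assume h: "z \<in> Xs" "z k = (a,c)" "1 \<le> a" "Suc c < lenf k a"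
  have "(z k, Tmap z k) \<in> Es k" using T_props(2)[OF h(1)] by blast
  then have "Tmap z k = sc k (z k)" using E_U h by simp
  then show ?thesis using h by (simp add: sc_def)
qed

lemma walk_W: "z \<in> Xs \<Longrightarrow> z k = (a,c) \<Longrightarrow> 1 \<le> a \<Longrightarrow> c + s < lenf k a \<Longrightarrow> ((Tmap^^s) z) k = (a, c+s)"
proof (induction s)
  case 0 then show ?case by simp
next
  case (Suc s)
  have "((Tmap^^s) z) k = (a, c+s)" using Suc by simp
  then have "Tmap ((Tmap^^s) z) k = (a, Suc (c+s))"
    using T_step[OF funpow_X[OF Suc.prems(1)]] Suc.prems by simp
  then show ?case by simp
qed

lemma path_walk:
  assumes "cwalk k w" "last w = base" "q < length w" "w!q = (a,c)" "1 \<le> a" "c + t < lenf k a"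
  shows "q + t < length w \<and> w!(q+t) = (a, c+t)"
  using assms(6)
proof (induction t)
  case 0 then show ?case using assms by simp
next
  case (Suc t)
  then have ih: "q + t < length w" "w!(q+t) = (a, c+t)" by auto
  have "Suc (q+t) < length w"
  proof (rule ccontr)
    assume "\<not> Suc (q+t) < length w"
    then have "q + t = length w - 1" using ih by simp
    then have "w!(q+t) = base" using assms(2) ih(1) by (metis last_conv_nth list.size(3) not_less0)
    then show False using ih(2) assms(5) by simp
  qed
  moreover have "(w!(q+t), w!Suc (q+t)) \<in> Es k" using path_edge[OF assms(1,2) calculation] .
  then have "w!Suc (q+t) = sc k (a, c+t)" using E_U ih(2) assms(5) by simp
  ultimately show ?case using Suc.prems assms(5) by (simp add: sc_def)
qed

lemma lemD: "z \<in> Xs \<Longrightarrow> z k = (a,1) \<Longrightarrow> 1 \<le> a \<Longrightarrow> a \<le> n \<Longrightarrow> n \<le> k \<Longrightarrow>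
   \<exists>s. degv (((Tmap^^s) z) n) \<le> enat a"
proof (induction k arbitrary: z)
  case 0 then show ?case by simp
next
  case (Suc k)
  show ?case
  proof (cases "n = Suc k")
    case True
    then show ?thesis using Suc.prems by (intro exI[of _ 0]) (simp add: degv_def)
  next
    case False
    then have nk: "n \<le> k" "a \<le> k" using Suc.prems by auto
    let ?P = "Pw k (lenf k) a"
    have P2: "?P ! 2 = (a,1)" "2 < length ?P" using P_two[OF Suc.prems(3) nk(2)] by auto
    have w1: "Tmap z (Suc k) = (a, 2)"
      using walk_W[OF Suc.prems(1,2,3), of 1] P2 by (simp add: numeral_2_eq_2)
    have wX: "Tmap z \<in> Xs" using T_props(1)[OF Suc.prems(1)] .
    have "Tmap z k = phi k (Tmap z (Suc k))" using Xs_D(2)[OF wX] by simp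
    also have "\<dots> = (a,1)" using w1 phi_pair[OF Suc.prems(3)] P2 by simp
    finally obtain s where "degv (((Tmap^^s) (Tmap z)) n) \<le> enat a"
      using Suc.IH[OF wX _ Suc.prems(3,4) nk(1)] by blast
    moreover have "(Tmap^^s) (Tmap z) = (Tmap^^(Suc s)) z" by (simp add: funpow_Suc_right del: funpow.simps)
    ultimately show ?thesis by metis
  qed
qed

theorem lemma3p9:
  fixes x :: "nat \<Rightarrow> nat \<times> nat" and i n :: nat
  assumes "x \<in> Xs" and "degX x = enat i" and "n > i"
  shows "\<forall>m. (INF j\<in>{m..}. degv (((Tmap ^^ j) x) n)) \<le> enat (i + 1)"
proof
  fix m
  have xX: "x \<in> Xs" by fact
  have ge: "enat i \<le> degv (x k)" for k using assms(2) unfolding degX_def by (metis INF_lower UNIV_I)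
  obtain K where K: "degv (x K) = enat i"
  proof (rule ccontr)
    assume "\<not> thesis"
    then have "degv (x k) \<noteq> enat i" for k using that by blast
    then have "enat (Suc i) \<le> degv (x k)" for k using ge[of k]
      by (metis Suc_ile_eq order_le_less)
    then have "enat (Suc i) \<le> degX x" unfolding degX_def by (rule INF_greatest)
    then show False using assms(2) by simp
  qed
  have xK: "x K = (i, snd (x K))" "x K \<noteq> base" using K
    by (auto simp: degv_def split: if_splits)
  have i1: "1 \<le> i" using Xs_D(1)[OF xX, of K] xK by (auto simp: Vs_iff) (metis fst_conv)
  have F1: "x k \<noteq> base \<and> fst (x k) = i" if "K \<le> k" for k
    using that
  proof (induction k rule: dec_induct)
    case base then show ?case using xK by (metis fst_conv)
  next
    case (step k)
    have nb: "x (Suc k) \<noteq> base" using nonbase_up[OF xX xK(2)] step by simp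
    obtain a c where ac: "x (Suc k) = (a,c)" "1 \<le> a" "a \<le> Suc k" "c < lenf (Suc k) a"
      using Xs_D(1)[OF xX, of "Suc k"] nb by (cases "x (Suc k)") (auto simp: Vs_iff)
    have "enat i \<le> enat a" using ge[of "Suc k"] ac by (simp add: degv_def)
    then have ia: "i \<le> a" by simp
    have "x k = Pw k (lenf k) a ! c" using Xs_D(2)[OF xX, of k] ac phi_pair by simp
    then have "a \<le> i" using P_mono[OF ac(2,3), of c] ac(4) step.IH by auto
    then show ?case using ia ac nb by simp
  qed
  define r where "r k = lenf k i - snd (x k)" for k
  have F2: "r k < r (Suc k)" if "K \<le> k" for k
  proof -
    have a: "x k \<noteq> base" "fst (x k) = i" "x (Suc k) \<noteq> base" "fst (x (Suc k)) = i" using F1 that by auto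
    obtain c where c: "x k = (i,c)" "1 \<le> c" "c < lenf k i" "i \<le> k"
      using a Xs_D(1)[OF xX, of k] by (cases "x k") (auto simp: Vs_iff)
    obtain c' where c': "x (Suc k) = (i,c')" "c' < lenf (Suc k) i" "i \<le> Suc k"
      using a Xs_D(1)[OF xX, of "Suc k"] by (cases "x (Suc k)") (auto simp: Vs_iff)
    let ?P = "Pw k (lenf k) i"
    have PP: "cwalk k ?P" "last ?P = base" using P_props[of i k] i1 c by auto
    have Pc: "?P ! c' = (i,c)" using Xs_D(2)[OF xX, of k] c c' phi_pair[OF i1] by simp
    have rk: "r k = lenf k i - c" "r (Suc k) = length ?P - c'" using c c' by (simp_all add: r_def)
    have W: "c' + (r k - 1) < length ?P \<and> ?P ! (c' + (r k - 1)) = (i, c + (r k - 1))"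
      using path_walk[OF PP c'(2)[simplified] Pc i1, of "r k - 1"] rk c by simp
    have "c' + (r k - 1) \<noteq> length ?P - 1"
    proof
      assume "c' + (r k - 1) = length ?P - 1"
      then have "?P ! (c' + (r k - 1)) = base" using PP(2) W by (metis last_conv_nth list.size(3) not_less0)
      then show False using W i1 by simp
    qed
    then show ?thesis using W rk c by (simp only:) arith
  qed
  have F3: "d \<le> r (K + d)" for d
  proof (induction d)
    case 0 then show ?case by simp
  next
    case (Suc d) then show ?case using F2[of "K+d"] by simp
  qed
  define M where "M = K + (m + n)"
  have M: "K \<le> M" "n \<le> M" "m \<le> r M" using F3[of "m+n"] by (auto simp: M_def)
  have a: "fst (x M) = i" "fst (x (Suc M)) = i" "x M \<noteq> base" "x (Suc M) \<noteq> base" using F1 M by auto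
  obtain c where c: "x M = (i,c)" "1 \<le> c" "c < lenf M i"
    using a Xs_D(1)[OF xX, of M] by (cases "x M") (auto simp: Vs_iff)
  obtain c' where c': "x (Suc M) = (i,c')" "c' < lenf (Suc M) i"
    using a Xs_D(1)[OF xX, of "Suc M"] by (cases "x (Suc M)") (auto simp: Vs_iff)
  let ?P = "Pw M (lenf M) i"
  have iM: "Suc i \<le> M" using assms(3) M by simp
  have PP: "cwalk M ?P" "last ?P = base" using P_props[of i M] i1 iM by auto
  have Pc: "?P ! c' = (i,c)" using Xs_D(2)[OF xX, of M] c c' phi_pair[OF i1] by simp
  obtain A B where AB: "?P = A @ B" "2 \<le> length B" "B!1 = (Suc i,1)" "\<forall>v\<in>set B. v = base \<or> fst v \<noteq> i"
    using P_split[OF i1 iM] by blast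
  have rM: "r M = lenf M i - c" using c by (simp add: r_def)
  have W: "c' + (r M - 1) < length ?P \<and> ?P ! (c' + (r M - 1)) = (i, c + (r M - 1))"
    using path_walk[OF PP c'(2)[simplified] Pc i1, of "r M - 1"] rM c by simp
  have lt: "c' + (r M - 1) < length A"
  proof (rule ccontr)
    assume "\<not> ?thesis"
    then have "?P ! (c' + (r M - 1)) = B ! (c' + (r M - 1) - length A)" "c' + (r M - 1) - length A < length B"
      using AB(1) W by (auto simp: nth_append)
    then have "?P ! (c' + (r M - 1)) \<in> set B" by simp
    then show False using W AB(4) i1 by fastforce
  qed
  define t0 where "t0 = Suc (length A) - c'"
  have t0m: "m \<le> t0" using lt M(3) c rM by (simp add: t0_def)
  have p0: "c' + t0 = Suc (length A)" "Suc (length A) < lenf (Suc M) i" using lt AB(1,2)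
    by (auto simp: t0_def)
  have W2: "((Tmap^^t0) x) (Suc M) = (i, Suc (length A))"
    using walk_W[OF xX c'(1) i1, of t0] p0 by simp
  have zX: "(Tmap^^t0) x \<in> Xs" using funpow_X[OF xX] .
  have "((Tmap^^t0) x) M = phi M (((Tmap^^t0) x) (Suc M))" using Xs_D(2)[OF zX] by simp
  also have "\<dots> = ?P ! Suc (length A)" using W2 phi_pair[OF i1] by simp
  also have "\<dots> = (Suc i, 1)" using AB by (simp add: nth_append)
  finally obtain s where s: "degv (((Tmap^^s) ((Tmap^^t0) x)) n) \<le> enat (Suc i)"
    using lemD[OF zX _ _ _ M(2), of "Suc i"] assms(3) by auto
  have "(Tmap^^s) ((Tmap^^t0) x) = (Tmap^^(s+t0)) x" by (simp add: funpow_add)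
  then have "degv (((Tmap^^(s+t0)) x) n) \<le> enat (i+1)" using s by simp
  moreover have "s + t0 \<in> {m..}" using t0m by simp
  ultimately show "(INF j\<in>{m..}. degv (((Tmap ^^ j) x) n)) \<le> enat (i + 1)"
    by (meson INF_lower order_trans)
qed

end
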